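(* Let $f:\mathbb{R}^n\to\mathbb{R}$ be a continuously differentiable convex function, and $s$ a positive integer. Let $h(x)=\sum_{i=1}^n h_i(x_i)$ with each $h_i:\mathbb{R}\to\mathbb{R}$ convex and continuously differentiable, with $h$ supercoercive ($\lim_{\|x\|\to\infty}h(x)/\|x\|=\infty$), and assume: (i) if $x_k\to x$ then $D_h(x,x_k)\to0$; (ii) if $D_h(x,x_k)\to0$ for some $x$, then $x_k\to x$; (iii) if $D_h(x_{k+1},x_k)\to0$ then $\|x_{k+1}-x_k\|\to0$. Assume $L_hh-f$ is convex for some $L_h>0$ and $L>L_h$. Let $(x_k)$ be generated by the BPG algorithm with $h$ and $L$, and assume $(x_k)$ is bounded. Then $f(x_k)$ converges to a limit $f^*$ and there exist $K\in\mathbb{N}$ and $c>0$ such that $f(x_k)-f^*\le c/k$ for all $k\ge K$.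
   Context: $C_s=\{x\in\mathbb{R}^n:\|x\|_0\le s\}$ where $\|x\|_0$ is the number of nonzero entries. $D_h(y,x)=h(y)-h(x)-\nabla h(x)^T(y-x)$. BPG algorithm: start from $x_0\in C_s$ and for $k\ge0$ pick $x_{k+1}\in\operatorname{argmin}_{x\in C_s}\ \nabla f(x_k)^T(x-x_k)+LD_h(x,x_k)$. *)

theory Defs
  imports "HOL-Analysis.Analysis"
begin

definition sparse_set :: "nat \<Rightarrow> (real^'n) set" where
  "sparse_set s = {x. card {i. x $ i \<noteq> 0} \<le> s}"

definition bregman :: "(real^'n \<Rightarrow> real) \<Rightarrow> (real^'n \<Rightarrow> real^'n) \<Rightarrow> real^'n \<Rightarrow> real^'n \<Rightarrow> real" where
  "bregman h gh y x = h y - h x - inner (gh x) (y - x)"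

definition sep_fun :: "('n::finite \<Rightarrow> real \<Rightarrow> real) \<Rightarrow> real^'n \<Rightarrow> real" where
  "sep_fun hi x = (\<Sum>i\<in>UNIV. hi i (x $ i))"

definition sep_grad :: "('n::finite \<Rightarrow> real \<Rightarrow> real) \<Rightarrow> real^'n \<Rightarrow> real^'n" where
  "sep_grad dhi x = (\<chi> i. dhi i (x $ i))"

definition bpg_seq :: "(real^'n \<Rightarrow> real^'n) \<Rightarrow> (real^'n \<Rightarrow> real) \<Rightarrow> (real^'n \<Rightarrow> real^'n)
     \<Rightarrow> real \<Rightarrow> nat \<Rightarrow> (nat \<Rightarrow> real^'n) \<Rightarrow> bool" where
  "bpg_seq gf h gh L s x \<longleftrightarrow> x 0 \<in> sparse_set s \<and>
     (\<forall>k. x (Suc k) \<in> sparse_set s \<and>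
        (\<forall>y\<in>sparse_set s.
           inner (gf (x k)) (x (Suc k) - x k) + L * bregman h gh (x (Suc k)) (x k)
           \<le> inner (gf (x k)) (y - x k) + L * bregman h gh y (x k)))"

end

theory Submission
  imports Defs
begin


lemma tangent1:
  fixes g :: "real \<Rightarrow> real"
  assumes "convex_on UNIV g" "(g has_real_derivative d) (at x)"
  shows "g x + d * (y - x) \<le> g y"
  using convex_on_imp_above_tangent[of UNIV g x y d] assms by auto

lemma tangentN:
  fixes F :: "'a::real_normed_vector \<Rightarrow> real"
  assumes cv: "convex_on UNIV F" and der: "(F has_derivative F') (at x)"
  shows "F x + F' (y - x) \<le> F y"
proof -
  define \<psi> where "\<psi> t = F (x + t *\<^sub>R (y - x))" for t
  have "convex_on UNIV \<psi>"
  proof (rule convex_onI)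
    fix u a b :: real assume "u > 0" "u < 1"
    have e: "x + ((1 - u) *\<^sub>R a + u *\<^sub>R b) *\<^sub>R (y - x) = (1 - u) *\<^sub>R (x + a *\<^sub>R (y - x)) + u *\<^sub>R (x + b *\<^sub>R (y - x))"
      by (simp add: algebra_simps)
    show "\<psi> ((1 - u) *\<^sub>R a + u *\<^sub>R b) \<le> (1 - u) * \<psi> a + u * \<psi> b"
      unfolding \<psi>_def e using convex_onD[OF cv, of u] \<open>u>0\<close> \<open>u<1\<close> by auto
  qed auto
  moreover have "(\<psi> has_real_derivative F' (y - x)) (at 0)"
  proof -
    have "((\<lambda>t. x + t *\<^sub>R (y - x)) has_derivative (\<lambda>t. t *\<^sub>R (y - x))) (at 0)"
      by (auto intro!: derivative_eq_intros)
    from has_derivative_compose[OF this, of F F'] der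
    have "(\<psi> has_derivative (\<lambda>t. F' (t *\<^sub>R (y - x)))) (at 0)"
      unfolding \<psi>_def by (simp add: o_def)
    moreover have "(\<lambda>t. F' (t *\<^sub>R (y - x))) = (\<lambda>t. F' (y - x) * t)"
      using has_derivative_linear[OF der] by (simp add: linear_scale mult.commute)
    ultimately show ?thesis by (simp add: has_field_derivative_def)
  qed
  ultimately have "\<psi> 0 + F' (y - x) * (1 - 0) \<le> \<psi> 1" by (rule tangent1)
  then show ?thesis unfolding \<psi>_def by simp
qed



lemma breg_sum:
  "bregman (sep_fun hi) (sep_grad dhi) y z =
     (\<Sum>i\<in>UNIV. hi i (y$i) - hi i (z$i) - dhi i (z$i) * (y$i - z$i))"
  by (simp add: bregman_def sep_fun_def sep_grad_def inner_vec_def sum_subtractf)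

lemma breg_nonneg:
  assumes "\<And>i t. (hi i has_real_derivative dhi i t) (at t)" "\<And>i. convex_on UNIV (hi i)"
  shows "bregman (sep_fun hi) (sep_grad dhi) y z \<ge> 0"
  unfolding breg_sum
proof (rule sum_nonneg)
  fix i
  have "hi i (z$i) + dhi i (z$i) * (y$i - z$i) \<le> hi i (y$i)"
    by (rule tangent1[OF assms(2) assms(1)])
  then show "0 \<le> hi i (y$i) - hi i (z$i) - dhi i (z$i) * (y$i - z$i)" by simp
qed

lemma h_deriv:
  assumes "\<And>i t. (hi i has_real_derivative dhi i t) (at t)"
  shows "(sep_fun hi has_derivative (\<lambda>v. inner (sep_grad dhi z) v)) (at z)"
proof -
  have "((\<lambda>y. \<Sum>i\<in>UNIV. hi i (y$i)) has_derivative (\<lambda>v. \<Sum>i\<in>UNIV. dhi i (z$i) * v$i)) (at z)"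
  proof (rule has_derivative_sum)
    fix i
    have "((\<lambda>y. y$i) has_derivative (\<lambda>v. v$i)) (at z)"
      using bounded_linear_imp_has_derivative[OF bounded_linear_vec_nth] .
    from has_derivative_compose[OF this assms(1)[of i "z$i", unfolded has_field_derivative_def]]
    show "((\<lambda>y. hi i (y$i)) has_derivative (\<lambda>v. dhi i (z$i) * v$i)) (at z)"
      by (simp add: o_def mult.commute)
  qed
  then show ?thesis by (simp add: sep_fun_def[abs_def] sep_grad_def inner_vec_def)
qed



theorem corollaryA6:
  fixes f :: "real^'n::finite \<Rightarrow> real" and gf :: "real^'n \<Rightarrow> real^'n"
    and hi dhi :: "'n \<Rightarrow> real \<Rightarrow> real"
    and s :: nat and Lh L :: real and x :: "nat \<Rightarrow> real^'n"
  assumes f_grad: "\<And>z. (f has_derivative (\<lambda>v. inner (gf z) v)) (at z)"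
    and f_C1: "continuous_on UNIV gf"
    and f_convex: "convex_on UNIV f"
    and s_pos: "s \<ge> 1"
    and hi_deriv: "\<And>i t. (hi i has_real_derivative dhi i t) (at t)"
    and hi_C1: "\<And>i. continuous_on UNIV (dhi i)"
    and hi_convex: "\<And>i. convex_on UNIV (hi i)"
    and h_supercoercive: "filterlim (\<lambda>z. sep_fun hi z / norm z) at_top at_infinity"
    and cond_i: "\<And>z xs. xs \<longlonglongrightarrow> z \<Longrightarrow>
        (\<lambda>k. bregman (sep_fun hi) (sep_grad dhi) z (xs k)) \<longlonglongrightarrow> 0"
    and cond_ii: "\<And>z xs. (\<lambda>k. bregman (sep_fun hi) (sep_grad dhi) z (xs k)) \<longlonglongrightarrow> 0 \<Longrightarrow>
        xs \<longlonglongrightarrow> z"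
    and cond_iii: "\<And>xs. (\<lambda>k. bregman (sep_fun hi) (sep_grad dhi) (xs (Suc k)) (xs k)) \<longlonglongrightarrow> 0
        \<Longrightarrow> (\<lambda>k. norm (xs (Suc k) - xs k)) \<longlonglongrightarrow> 0"
    and Lh_pos: "Lh > 0"
    and rel_smooth: "convex_on UNIV (\<lambda>z. Lh * sep_fun hi z - f z)"
    and L_gt: "L > Lh"
    and bpg: "bpg_seq gf (sep_fun hi) (sep_grad dhi) L s x"
    and bdd: "bounded (range x)"
  shows "\<exists>fstar. (\<lambda>k. f (x k)) \<longlonglongrightarrow> fstar \<and>
           (\<exists>K c. c > 0 \<and> (\<forall>k\<ge>K. f (x k) - fstar \<le> c / real k))"
proof -
  define D where "D = bregman (sep_fun hi) (sep_grad dhi)"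
  have Dnn: "\<And>y z. D y z \<ge> 0" unfolding D_def by (rule breg_nonneg[OF hi_deriv hi_convex])
  have Dsum: "\<And>y z. D y z = (\<Sum>i\<in>UNIV. hi i (y$i) - hi i (z$i) - dhi i (z$i) * (y$i - z$i))"
    unfolding D_def by (rule breg_sum)
  have Dself: "\<And>z. D z z = 0" by (simp add: Dsum)
  have xin: "\<And>k. x k \<in> sparse_set s" using bpg unfolding bpg_seq_def by (metis not0_implies_Suc)
  have opt: "\<And>k y. y \<in> sparse_set s \<Longrightarrow>
      inner (gf (x k)) (x (Suc k) - x k) + L * D (x (Suc k)) (x k)
           \<le> inner (gf (x k)) (y - x k) + L * D y (x k)"
    using bpg unfolding bpg_seq_def D_def by blast
  have desc1: "f (x (Suc k)) \<le> f (x k) + inner (gf (x k)) (x (Suc k) - x k) + Lh * D (x (Suc k)) (x k)" for k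
  proof -
    have der: "((\<lambda>z. Lh * sep_fun hi z - f z) has_derivative
        (\<lambda>v. Lh * inner (sep_grad dhi (x k)) v - inner (gf (x k)) v)) (at (x k))"
      by (intro has_derivative_diff has_derivative_mult_right h_deriv hi_deriv f_grad)
    from tangentN[OF rel_smooth der, of "x (Suc k)"]
    show ?thesis unfolding D_def bregman_def by (simp add: right_diff_distrib)
  qed
  have desc: "f (x (Suc k)) \<le> f (x k) - (L - Lh) * D (x (Suc k)) (x k)" for k
  proof -
    have "inner (gf (x k)) (x (Suc k) - x k) + L * D (x (Suc k)) (x k) \<le> 0"
      using opt[OF xin[of k], of k] by (simp add: Dself)
    then show ?thesis using desc1[of k] by (simp add: left_diff_distrib)
  qed
  have descm: "f (x (Suc k)) \<le> f (x k)" for k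
    using desc[of k] Dnn[of "x (Suc k)" "x k"] L_gt by (smt (verit) mult_nonneg_nonneg)
  have dec: "decseq (\<lambda>k. f (x k))" using descm by (simp add: decseq_SucI)
  have fcont: "continuous_on UNIV f"
    using f_grad has_derivative_continuous continuous_at_imp_continuous_on by blast
  have "compact (closure (range x))" using bdd by (simp add: compact_eq_bounded_closed bounded_closure)
  then have "compact (f ` closure (range x))"
    using fcont by (meson compact_continuous_image continuous_on_subset subset_UNIV)
  then have "bounded (f ` closure (range x))" by (rule compact_imp_bounded)
  then obtain B where B: "\<And>y. y \<in> f ` closure (range x) \<Longrightarrow> norm y \<le> B"
    by (meson bounded_iff)
  have "Bseq (\<lambda>k. f (x k))"
  proof (rule BseqI')
    fix n show "norm (f (x n)) \<le> B"
    proof -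
      have "f (x n) \<in> f ` closure (range x)" by (intro imageI subsetD[OF closure_subset] rangeI)
      then show ?thesis by (rule B)
    qed
  qed
  then have "convergent (\<lambda>k. f (x k))"
    by (rule Bseq_monoseq_convergent) (simp add: monoseq_iff dec)
  then obtain fstar where flim: "(\<lambda>k. f (x k)) \<longlonglongrightarrow> fstar" by (auto simp: convergent_def)
  have fge: "\<And>k. fstar \<le> f (x k)" using decseq_ge[OF dec flim] .
  have Dstep: "(\<lambda>k. D (x (Suc k)) (x k)) \<longlonglongrightarrow> 0"
  proof (rule real_tendsto_sandwich[where f="\<lambda>_. 0" and h="\<lambda>k. (f (x k) - f (x (Suc k))) / (L - Lh)"])
    show "\<forall>\<^sub>F k in sequentially. 0 \<le> D (x (Suc k)) (x k)" using Dnn by simp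
    show "\<forall>\<^sub>F k in sequentially. D (x (Suc k)) (x k) \<le> (f (x k) - f (x (Suc k))) / (L - Lh)"
    proof (intro always_eventually allI)
      fix k
      have "(L - Lh) * D (x (Suc k)) (x k) \<le> f (x k) - f (x (Suc k))" using desc[of k] by linarith
      then show "D (x (Suc k)) (x k) \<le> (f (x k) - f (x (Suc k))) / (L - Lh)"
        using L_gt by (simp add: pos_le_divide_eq mult.commute)
    qed
    have "(\<lambda>k. f (x k) - f (x (Suc k))) \<longlonglongrightarrow> fstar - fstar"
      using flim LIMSEQ_Suc[OF flim] by (intro tendsto_diff)
    then have "(\<lambda>k. f (x k) - f (x (Suc k))) \<longlonglongrightarrow> 0" by simp
    then show "(\<lambda>k. (f (x k) - f (x (Suc k))) / (L - Lh)) \<longlonglongrightarrow> 0"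
      by (rule tendsto_divide_zero)
  qed auto
  have steps: "(\<lambda>k. norm (x (Suc k) - x k)) \<longlonglongrightarrow> 0"
    using cond_iii[of x] Dstep unfolding D_def .
  obtain xs r where r: "strict_mono r" and xr: "(x \<circ> r) \<longlonglongrightarrow> xs"
    using bounded_imp_convergent_subsequence[OF bdd] by blast
  have fxs: "f xs = fstar"
  proof -
    have "(\<lambda>j. f ((x \<circ> r) j)) \<longlonglongrightarrow> f xs"
      using continuous_on_tendsto_compose[OF fcont xr] by simp
    moreover have "(\<lambda>j. f ((x \<circ> r) j)) \<longlonglongrightarrow> fstar"
      using LIMSEQ_subseq_LIMSEQ[OF flim r] by (simp add: o_def)
    ultimately show ?thesis using LIMSEQ_unique by blast
  qed
  define \<delta> where "\<delta> = Min (insert 1 {\<bar>xs$i\<bar> | i. xs$i \<noteq> 0})"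
  have fin: "finite (insert 1 {\<bar>xs$i\<bar> | i. xs$i \<noteq> 0})" by simp
  have dpos: "\<delta> > 0" unfolding \<delta>_def using fin by (subst Min_gr_iff) auto
  have dle: "\<And>i. xs$i \<noteq> 0 \<Longrightarrow> \<delta> \<le> \<bar>xs$i\<bar>" unfolding \<delta>_def using fin
    by (intro Min_le) auto
  have supp: "\<And>y i. norm (y - xs) < \<delta> \<Longrightarrow> xs$i \<noteq> 0 \<Longrightarrow> y$i \<noteq> 0"
  proof -
    fix y i assume a: "norm (y - xs) < \<delta>" "xs$i \<noteq> 0"
    have "\<bar>(y - xs)$i\<bar> \<le> norm (y - xs)" by (rule component_le_norm_cart)
    then show "y$i \<noteq> 0" using a dle[OF a(2)] by auto
  qed
  have "\<exists>\<epsilon>>0. \<forall>y. D xs y < \<epsilon> \<longrightarrow> norm (y - xs) < \<delta>/2"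
  proof (rule ccontr)
    assume neg: "\<not> ?thesis"
    then have "\<forall>m. \<exists>y. D xs y < inverse (real (Suc m)) \<and> \<not> norm (y - xs) < \<delta>/2"
    proof -
      have a: "\<forall>e>0. \<exists>y. D xs y < e \<and> \<not> norm (y - xs) < \<delta>/2" using neg by blast
      show ?thesis
      proof
        fix m :: nat
        have "inverse (real (Suc m)) > 0" by simp
        then show "\<exists>y. D xs y < inverse (real (Suc m)) \<and> \<not> norm (y - xs) < \<delta>/2" using a by blast
      qed
    qed
    then obtain ys where ys: "\<And>m. D xs (ys m) < inverse (real (Suc m))" "\<And>m. \<not> norm (ys m - xs) < \<delta>/2"
      by metis
    have le: "\<forall>\<^sub>F m in sequentially. D xs (ys m) \<le> inverse (real (Suc m))"
      using ys(1) less_imp_le by (intro always_eventually allI) blast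
    have "(\<lambda>m. D xs (ys m)) \<longlonglongrightarrow> 0"
      by (rule real_tendsto_sandwich[where f="\<lambda>_. 0" and h="\<lambda>m. inverse (real (Suc m))", OF _ le])
        (use Dnn LIMSEQ_inverse_real_of_nat in auto)
    then have "ys \<longlonglongrightarrow> xs" unfolding D_def by (rule cond_ii)
    then have "(\<lambda>m. ys m - xs) \<longlonglongrightarrow> xs - xs" by (intro tendsto_diff tendsto_const)
    then have "(\<lambda>m. ys m - xs) \<longlonglongrightarrow> 0" by simp
    then obtain m where "norm (ys m - xs - 0) < \<delta>/2" using LIMSEQ_D[of _ 0 "\<delta>/2"] dpos by fastforce
    then show False using ys(2)[of m] by simp
  qed
  then obtain \<epsilon> where eps: "\<epsilon> > 0" "\<And>y. D xs y < \<epsilon> \<Longrightarrow> norm (y - xs) < \<delta>/2" by blast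
  obtain K1 where K1: "\<And>k. k \<ge> K1 \<Longrightarrow> norm (x (Suc k) - x k) < \<delta>/2"
    using LIMSEQ_D[OF steps, of "\<delta>/2"] dpos by fastforce
  have "(\<lambda>j. D xs ((x \<circ> r) j)) \<longlonglongrightarrow> 0" unfolding D_def by (rule cond_i[OF xr])
  then obtain j0 where j0: "\<And>j. j \<ge> j0 \<Longrightarrow> D xs (x (r j)) < \<epsilon>"
    using LIMSEQ_D[of _ 0 \<epsilon>] eps(1) Dnn by fastforce
  define K0 where "K0 = r (max j0 K1)"
  have K0ge: "K0 \<ge> K1" unfolding K0_def using seq_suble[OF r, of "max j0 K1"] by linarith
  have DK0: "D xs (x K0) < \<epsilon>" unfolding K0_def by (rule j0) simp
  have key: "f (x (Suc k)) - f xs \<le> L * (D xs (x k) - D xs (x (Suc k)))"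
    if sp: "\<forall>i. xs$i \<noteq> 0 \<longrightarrow> x (Suc k)$i \<noteq> 0" for k
  proof -
    define g where "g = gf (x k)"
    define x1 where "x1 = x (Suc k)"
    define xk where "xk = x k"
    define Phi where "Phi t j = g$j * (t - xk$j) + L * (hi j t - hi j (xk$j) - dhi j (xk$j) * (t - xk$j))" for t j
    have PhiS: "inner g (z - xk) + L * D z xk = (\<Sum>j\<in>UNIV. Phi (z$j) j)" for z
      unfolding Phi_def Dsum inner_vec_def
      by (simp add: sum_distrib_left sum.distrib[symmetric] algebra_simps)
    have coord: "(g$i + L * (dhi i (x1$i) - dhi i (xk$i))) * (xs$i - x1$i) = 0" for i
    proof (cases "x1$i = 0")
      case True then have "xs$i = 0" using sp x1_def by auto
      then show ?thesis using True by simp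
    next
      case False
      have min: "Phi (x1$i) i \<le> Phi t i" for t
      proof -
        define y where "y = (\<chi> j. if j = i then t else x1$j)"
        have "{j. y$j \<noteq> 0} \<subseteq> {j. x1$j \<noteq> 0}" using False by (auto simp: y_def)
        then have "card {j. y$j \<noteq> 0} \<le> card {j. x1$j \<noteq> 0}" by (intro card_mono) auto
        moreover have "card {j. x1$j \<noteq> 0} \<le> s"
          using xin[of "Suc k"] unfolding x1_def sparse_set_def by simp
        ultimately have ys: "y \<in> sparse_set s" unfolding sparse_set_def by simp
        have "(\<Sum>j\<in>UNIV. Phi (x1$j) j) \<le> (\<Sum>j\<in>UNIV. Phi (y$j) j)"
          using opt[OF ys, of k] unfolding PhiS[symmetric] x1_def xk_def g_def .
        moreover have "(\<Sum>j\<in>UNIV. Phi (y$j) j) = (\<Sum>j\<in>UNIV. Phi (x1$j) j) + (Phi t i - Phi (x1$i) i)"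
        proof -
          have "(\<Sum>j\<in>UNIV. Phi (y$j) j) - (\<Sum>j\<in>UNIV. Phi (x1$j) j) = (\<Sum>j\<in>UNIV. Phi (y$j) j - Phi (x1$j) j)"
            by (simp add: sum_subtractf)
          also have "\<dots> = (\<Sum>j\<in>UNIV. if j = i then Phi t i - Phi (x1$i) i else 0)"
            by (rule sum.cong) (auto simp: y_def)
          also have "\<dots> = Phi t i - Phi (x1$i) i" by simp
          finally show ?thesis by simp
        qed
        ultimately show ?thesis by simp
      qed
      have der: "((\<lambda>t. Phi t i) has_real_derivative g$i + L * (dhi i (x1$i) - dhi i (xk$i))) (at (x1$i))"
        unfolding Phi_def by (auto intro!: derivative_eq_intros hi_deriv simp: algebra_simps)
      have "g$i + L * (dhi i (x1$i) - dhi i (xk$i)) = 0"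
        by (rule DERIV_local_min[OF der, of 1]) (use min in auto)
      then show ?thesis by simp
    qed
    have three: "inner g (x1 - xk) + L * D x1 xk = inner g (xs - xk) + L * D xs xk - L * D xs x1"
    proof -
      have "inner g (xs - xk) + L * D xs xk - L * D xs x1 - (inner g (x1 - xk) + L * D x1 xk)
           = (\<Sum>i\<in>UNIV. (g$i + L * (dhi i (x1$i) - dhi i (xk$i))) * (xs$i - x1$i))"
        unfolding Dsum inner_vec_def
        by (simp add: sum_distrib_left sum_subtractf[symmetric] sum.distrib[symmetric] algebra_simps)
      also have "\<dots> = 0" by (simp only: coord sum.neutral_const)
      finally show ?thesis by simp
    qed
    have "f xk + inner g (xs - xk) \<le> f xs"
      using tangentN[OF f_convex f_grad[of xk], of xs] unfolding g_def xk_def by simp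
    moreover have "f x1 \<le> f xk + inner g (x1 - xk) + Lh * D x1 xk"
      using desc1[of k] unfolding x1_def xk_def g_def .
    moreover have "Lh * D x1 xk \<le> L * D x1 xk" using Dnn[of x1 xk] L_gt by (simp add: mult_right_mono)
    ultimately show ?thesis using three unfolding x1_def xk_def by (simp add: right_diff_distrib)
  qed
  have spn: "\<forall>i. xs$i \<noteq> 0 \<longrightarrow> x (Suc (K0 + n))$i \<noteq> 0" if "D xs (x (K0 + n)) < \<epsilon>" for n
  proof -
    have "norm (x (K0 + n) - xs) < \<delta>/2" using eps(2)[OF that] .
    moreover have "norm (x (Suc (K0 + n)) - x (K0 + n)) < \<delta>/2" using K1 K0ge by simp
    ultimately have "norm ((x (Suc (K0 + n)) - x (K0 + n)) + (x (K0 + n) - xs)) < \<delta>"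
      by (intro norm_triangle_lt) simp
    then have "norm (x (Suc (K0 + n)) - xs) < \<delta>" by simp
    then show ?thesis using supp by blast
  qed
  have inv: "D xs (x (K0 + n)) < \<epsilon>" for n
  proof (induction n)
    case 0 show ?case using DK0 by simp
  next
    case (Suc n)
    have "f (x (Suc (K0 + n))) - f xs \<le> L * (D xs (x (K0 + n)) - D xs (x (Suc (K0 + n))))"
      by (rule key[OF spn[OF Suc.IH]])
    moreover have "f xs \<le> f (x (Suc (K0 + n)))" using fge fxs by simp
    ultimately have "0 \<le> L * (D xs (x (K0 + n)) - D xs (x (Suc (K0 + n))))" by linarith
    then have "D xs (x (Suc (K0 + n))) \<le> D xs (x (K0 + n))"
      using L_gt Lh_pos by (simp add: zero_le_mult_iff)
    then show ?case using Suc.IH by simp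
  qed
  have keyall: "f (x (Suc (K0 + n))) - fstar \<le> L * (D xs (x (K0 + n)) - D xs (x (Suc (K0 + n))))" for n
    using key[OF spn[OF inv[of n]]] fxs by simp
  have sumineq: "real n * (f (x (K0 + n)) - fstar) \<le> L * (D xs (x K0) - D xs (x (K0 + n)))" for n
  proof (induction n)
    case 0 show ?case by simp
  next
    case (Suc n)
    have a: "f (x (Suc (K0 + n))) - fstar \<le> L * (D xs (x (K0 + n)) - D xs (x (Suc (K0 + n))))"
      by (rule keyall)
    have "real n * (f (x (Suc (K0 + n))) - fstar) \<le> real n * (f (x (K0 + n)) - fstar)"
      using descm[of "K0 + n"] by (intro mult_left_mono) auto
    then have "real (Suc n) * (f (x (Suc (K0 + n))) - fstar) \<le>
        L * (D xs (x K0) - D xs (x (K0 + n))) + L * (D xs (x (K0 + n)) - D xs (x (Suc (K0 + n))))"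
      using Suc.IH a by (simp add: distrib_right)
    then show ?case by (simp add: right_diff_distrib)
  qed
  define c where "c = 2 * L * D xs (x K0) + 1"
  have cpos: "c > 0" unfolding c_def using Dnn[of xs "x K0"] L_gt Lh_pos by (smt (verit) mult_nonneg_nonneg)
  have "\<forall>k\<ge>2 * K0 + 1. f (x k) - fstar \<le> c / real k"
  proof (intro allI impI)
    fix k assume k: "k \<ge> 2 * K0 + 1"
    define n where "n = k - K0"
    have kn: "k = K0 + n" using k unfolding n_def by simp
    have a0: "f (x k) - fstar \<ge> 0" using fge[of k] by simp
    have "real n * (f (x k) - fstar) \<le> L * D xs (x K0)"
    proof -
      have "0 \<le> L * D xs (x k)" using Dnn[of xs "x k"] L_gt Lh_pos by simp
      then show ?thesis using sumineq[of n] unfolding kn by (simp add: right_diff_distrib)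
    qed
    moreover have "real k \<le> 2 * real n" using k unfolding n_def by linarith
    then have "real k * (f (x k) - fstar) \<le> 2 * real n * (f (x k) - fstar)"
      using a0 by (intro mult_right_mono) auto
    ultimately have "real k * (f (x k) - fstar) \<le> c" unfolding c_def by simp
    moreover have "real k > 0" using k by simp
    ultimately show "f (x k) - fstar \<le> c / real k" by (simp add: pos_le_divide_eq mult.commute)
  qed
  then show ?thesis using flim cpos by blast
qed
end
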